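(* Let $q\geq 5$ and $n\geq 1$ be integers, and let $c>0$ be a real number such that $k=\frac{n(q-1)}{2q}\bigl(\log (n(q-1))+c\bigr)$ is an integer. Then $$\Vert \nu_n^{*k}-\pi_n\Vert_{TV}^2\leq \frac14\left(e^{e^{-c}}-1\right).$$
   Context: For integers $n\geq1$, $q\geq2$, the Hamming scheme $H(n,q)$ is the graph with vertex set $X_n=\{0,1,\dots,q-1\}^n$ in which $x=(x_1,\dots,x_n)$ and $x'=(x'_1,\dots,x'_n)$ are adjacent ($x\sim x'$) iff $d(x,x'):=\#\{j: x_j\neq x'_j\}=1$. The simple random walk has transition probability $p_n(x,x')=\frac{1}{n(q-1)}$ if $x\sim x'$ and $0$ otherwise. Let $p_n^{(0)}(x,x')=\delta_{x,x'}$, $p_n^{(k)}(x,x')=\sum_{y\in X_n}p_n^{(k-1)}(x,y)p_n(y,x')$, let $x^{(0)}=(0,\dots,0)$, and let $\nu_n^{*k}(x)=p_n^{(k)}(x^{(0)},x)$ be the $k$-step distribution started at $x^{(0)}$. $\pi_n$ is the uniform probability measure on $X_n$. For measures $\mu,\nu$ on $X_n$, $\Vert\mu-\nu\Vert_{TV}=\max_{S\subset X_n}|\mu(S)-\nu(S)|$. *)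

theory Defs
  imports Complex_Main
begin

definition hamming_space :: "nat \<Rightarrow> nat \<Rightarrow> nat list set" where
  "hamming_space n q = {x. length x = n \<and> (\<forall>i<n. x ! i < q)}"

definition hdist :: "nat list \<Rightarrow> nat list \<Rightarrow> nat" where
  "hdist x y = card {j. j < length x \<and> x ! j \<noteq> y ! j}"

definition trans_p :: "nat \<Rightarrow> nat \<Rightarrow> nat list \<Rightarrow> nat list \<Rightarrow> real" where
  "trans_p n q x y = (if hdist x y = 1 then 1 / (real n * (real q - 1)) else 0)"

fun trans_pk :: "nat \<Rightarrow> nat \<Rightarrow> nat \<Rightarrow> nat list \<Rightarrow> nat list \<Rightarrow> real" where
  "trans_pk n q 0 x y = (if x = y then 1 else 0)"
| "trans_pk n q (Suc k) x y =
     (\<Sum>z\<in>hamming_space n q. trans_pk n q k x z * trans_p n q z y)"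

definition nu_k :: "nat \<Rightarrow> nat \<Rightarrow> nat \<Rightarrow> nat list \<Rightarrow> real" where
  "nu_k n q k x = trans_pk n q k (replicate n 0) x"

definition unif :: "nat \<Rightarrow> nat \<Rightarrow> nat list \<Rightarrow> real" where
  "unif n q x = 1 / real q ^ n"

definition tv_dist :: "nat \<Rightarrow> nat \<Rightarrow> (nat list \<Rightarrow> real) \<Rightarrow> (nat list \<Rightarrow> real) \<Rightarrow> real" where
  "tv_dist n q \<mu> \<nu> = Max {\<bar>sum \<mu> S - sum \<nu> S\<bar> | S. S \<subseteq> hamming_space n q}"

end

theory Submission
  imports Defs "HOL-Analysis.Convex"
begin

lemma hs_0: "hamming_space 0 q = {[]}"
  by (auto simp: hamming_space_def)

lemma hs_Suc: "hamming_space (Suc n) q = (\<lambda>(v,xs). v#xs) ` ({..<q} \<times> hamming_space n q)"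
proof (rule set_eqI, rule iffI)
  fix x assume "x \<in> hamming_space (Suc n) q"
  then obtain y ys where x: "x = y # ys" "length ys = n" and h: "\<forall>i<Suc n. x ! i < q"
    by (auto simp: hamming_space_def length_Suc_conv)
  have "y < q" using h[rule_format, of 0] x by simp
  moreover have "\<forall>i<n. ys ! i < q" using h x by auto
  ultimately show "x \<in> (\<lambda>(v,xs). v#xs) ` ({..<q} \<times> hamming_space n q)"
    using x by (auto simp: hamming_space_def)
next
  fix x assume "x \<in> (\<lambda>(v,xs). v#xs) ` ({..<q} \<times> hamming_space n q)"
  then show "x \<in> hamming_space (Suc n) q"
    by (auto simp: hamming_space_def nth_Cons split: nat.splits)
qed

lemma hs_finite: "finite (hamming_space n q)"
proof -
  have "hamming_space n q \<subseteq> {xs. set xs \<subseteq> {..<q} \<and> length xs = n}"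
    by (auto simp: hamming_space_def in_set_conv_nth)
  thus ?thesis using finite_lists_length_eq[of "{..<q}" n] finite_subset by blast
qed

lemma factor:
  "(\<Sum>x\<in>hamming_space n q. \<Prod>i<n. f i (x!i)) = (\<Prod>i<n. \<Sum>v<q. (f i v :: real))"
proof (induction n arbitrary: f)
  case 0
  then show ?case by (simp add: hs_0)
next
  case (Suc n)
  have inj: "inj_on (\<lambda>(v,xs). v#xs) ({..<q} \<times> hamming_space n q)"
    by (auto simp: inj_on_def)
  have "(\<Sum>x\<in>hamming_space (Suc n) q. \<Prod>i<Suc n. f i (x!i))
      = (\<Sum>(v,xs)\<in>{..<q} \<times> hamming_space n q. \<Prod>i<Suc n. f i ((v#xs)!i))"
    unfolding hs_Suc by (subst sum.reindex[OF inj]) (simp add: case_prod_beta')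
  also have "\<dots> = (\<Sum>v<q. \<Sum>xs\<in>hamming_space n q. f 0 v * (\<Prod>i<n. f (Suc i) (xs!i)))"
    by (subst sum.cartesian_product[symmetric]) (simp add: prod.lessThan_Suc_shift del: prod.lessThan_Suc)
  also have "\<dots> = (\<Sum>v<q. f 0 v) * (\<Sum>xs\<in>hamming_space n q. (\<Prod>i<n. f (Suc i) (xs!i)))"
    by (simp add: sum_product)
  also have "\<dots> = (\<Prod>i<Suc n. \<Sum>v<q. f i v)"
    using Suc.IH[of "\<lambda>i. f (Suc i)"] by (simp add: prod.lessThan_Suc_shift del: prod.lessThan_Suc)
  finally show ?case .
qed

definition gg :: "nat \<Rightarrow> nat set \<Rightarrow> nat \<Rightarrow> nat \<Rightarrow> real" where
  "gg q S i v = (if i \<in> S then 1 / real q else (if v = 0 then 1 else 0) - 1 / real q)"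

definition phi :: "nat \<Rightarrow> nat \<Rightarrow> nat set \<Rightarrow> nat list \<Rightarrow> real" where
  "phi n q S x = (\<Prod>i<n. gg q S i (x!i))"

definition lam :: "nat \<Rightarrow> nat \<Rightarrow> nat set \<Rightarrow> real" where
  "lam n q S = (real q * real (card S) - real n) / (real n * (real q - 1))"

definition hh :: "nat list \<Rightarrow> nat \<Rightarrow> nat \<Rightarrow> nat \<Rightarrow> real" where
  "hh y i j v = (if j = i then (if v \<noteq> y!j then 1 else 0) else (if v = y!j then 1 else 0))"

lemma prod_ind: "(\<Prod>j<(n::nat). (if P j then 1 else 0 :: real)) = (if \<forall>j<n. P j then 1 else 0)"
  by (induction n) (auto simp: less_Suc_eq)

lemma hdist_ind:
  assumes "length z = n"
  shows "(if hdist z y = 1 then 1 else 0 :: real) = (\<Sum>i<n. \<Prod>j<n. hh y i j (z!j))"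
proof -
  define D where "D = {j. j < n \<and> z!j \<noteq> y!j}"
  have hd: "hdist z y = card D" using assms by (simp add: hdist_def D_def)
  have fD: "finite D" by (simp add: D_def)
  have t: "(\<Prod>j<n. hh y i j (z!j)) = (if D = {i} then 1 else 0)" if "i < n" for i
  proof -
    have "(\<Prod>j<n. hh y i j (z!j)) = (\<Prod>j<n. (if (j = i \<longleftrightarrow> z!j \<noteq> y!j) then 1 else 0))"
      by (rule prod.cong) (auto simp: hh_def)
    also have "\<dots> = (if \<forall>j<n. (j = i \<longleftrightarrow> z!j \<noteq> y!j) then 1 else 0)" by (rule prod_ind)
    also have "(\<forall>j<n. (j = i \<longleftrightarrow> z!j \<noteq> y!j)) \<longleftrightarrow> D = {i}"
      using that by (auto simp: D_def)
    finally show ?thesis .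
  qed
  have "(\<Sum>i<n. \<Prod>j<n. hh y i j (z!j)) = (\<Sum>i<n. (if D = {i} then 1 else 0))"
    by (rule sum.cong) (auto simp: t)
  also have "\<dots> = (if card D = 1 then 1 else 0)"
  proof (cases "card D = 1")
    case True
    then obtain a where a: "D = {a}" by (auto simp: card_Suc_eq)
    then have "a < n" by (auto simp: D_def)
    then show ?thesis using a True by (simp add: sum.delta')
  next
    case False
    then show ?thesis by (auto intro!: sum.neutral)
  qed
  finally show ?thesis by (simp add: hd)
qed

lemma sum_gg: "q \<ge> 1 \<Longrightarrow> (\<Sum>v<q. gg q S i v) = (if i \<in> S then 1 else 0)"
  by (simp add: gg_def sum.distrib sum_subtractf)

lemma gg_nz: "q \<ge> 2 \<Longrightarrow> gg q S i v \<noteq> 0"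
  by (auto simp: gg_def field_simps)

lemma eigen:
  assumes q: "q \<ge> 2" and n: "n \<ge> 1" and S: "S \<subseteq> {..<n}" and y: "y \<in> hamming_space n q"
  shows "(\<Sum>z\<in>hamming_space n q. phi n q S z * trans_p n q z y) = lam n q S * phi n q S y"
proof -
  have yl: "length y = n" and yq: "\<And>i. i < n \<Longrightarrow> y!i < q" using y by (auto simp: hamming_space_def)
  define N where "N = real n * (real q - 1)"
  have Npos: "N > 0" using q n by (simp add: N_def)
  have tp: "trans_p n q z y = (1/N) * (\<Sum>i<n. \<Prod>j<n. hh y i j (z!j))" if "z \<in> hamming_space n q" for z
  proof -
    have "length z = n" using that by (simp add: hamming_space_def)
    have "trans_p n q z y = (1/N) * (if hdist z y = 1 then 1 else 0)"
      by (simp add: trans_p_def N_def)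
    with hdist_ind[OF \<open>length z = n\<close>, of y] show ?thesis by simp
  qed
  have "(\<Sum>z\<in>hamming_space n q. phi n q S z * trans_p n q z y)
      = (1/N) * (\<Sum>i<n. \<Sum>z\<in>hamming_space n q. \<Prod>j<n. gg q S j (z!j) * hh y i j (z!j))"
    by (simp add: tp phi_def sum_distrib_left sum_distrib_right prod.distrib sum.swap[of _ "{..<n}"] mult_ac)
  also have "\<dots> = (1/N) * (\<Sum>i<n. \<Prod>j<n. \<Sum>v<q. gg q S j v * hh y i j v)"
  proof -
    have "(\<Sum>z\<in>hamming_space n q. \<Prod>j<n. gg q S j (z!j) * hh y i j (z!j)) = (\<Prod>j<n. \<Sum>v<q. gg q S j v * hh y i j v)" for i
      by (rule factor[where f="\<lambda>j v. gg q S j v * hh y i j v"])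
    then show ?thesis by simp
  qed
  also have "\<dots> = (1/N) * (\<Sum>i<n. (if i \<in> S then real q * phi n q S y else 0) - phi n q S y)"
  proof -
    have "(\<Prod>j<n. \<Sum>v<q. gg q S j v * hh y i j v) = (if i \<in> S then real q * phi n q S y else 0) - phi n q S y"
      if i: "i < n" for i
    proof -
      have c1: "(\<Sum>v<q. gg q S j v * hh y i j v) = gg q S j (y!j)" if "j < n" "j \<noteq> i" for j
        using that yq[OF that(1)] by (simp add: hh_def if_distrib sum.delta' cong: if_cong)
      have c2: "(\<Sum>v<q. gg q S i v * hh y i i v) = (if i \<in> S then 1 else 0) - gg q S i (y!i)"
      proof -
        have "(\<Sum>v<q. gg q S i v * hh y i i v) = (\<Sum>v<q. gg q S i v - (if v = y!i then gg q S i v else 0))"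
          by (rule sum.cong) (auto simp: hh_def)
        also have "\<dots> = (\<Sum>v<q. gg q S i v) - gg q S i (y!i)"
          using yq[OF i] by (simp add: sum_subtractf sum.delta')
        finally show ?thesis using q by (simp add: sum_gg)
      qed
      define R where "R = (\<Prod>j\<in>{..<n}-{i}. gg q S j (y!j))"
      have ph: "phi n q S y = gg q S i (y!i) * R"
        unfolding phi_def R_def using i by (simp add: prod.remove)
      have "(\<Prod>j<n. \<Sum>v<q. gg q S j v * hh y i j v)
          = (\<Sum>v<q. gg q S i v * hh y i i v) * (\<Prod>j\<in>{..<n}-{i}. \<Sum>v<q. gg q S j v * hh y i j v)"
        using i by (simp add: prod.remove)
      also have "(\<Prod>j\<in>{..<n}-{i}. \<Sum>v<q. gg q S j v * hh y i j v) = R"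
        unfolding R_def by (rule prod.cong) (auto simp: c1)
      finally have e: "(\<Prod>j<n. \<Sum>v<q. gg q S j v * hh y i j v) = ((if i \<in> S then 1 else 0) - gg q S i (y!i)) * R"
        using c2 by simp
      show ?thesis
      proof (cases "i \<in> S")
        case True
        then have "gg q S i (y!i) = 1 / real q" by (simp add: gg_def)
        then show ?thesis using e ph True q by (simp add: field_simps)
      next
        case False
        then show ?thesis using e ph by simp
      qed
    qed
    then show ?thesis by simp
  qed
  also have "\<dots> = (1/N) * ((real q * real (card S) - real n) * phi n q S y)"
  proof -
    have "(\<Sum>i<n. (if i \<in> S then real q * phi n q S y else 0)) = real (card S) * (real q * phi n q S y)"
      using S by (simp add: sum.If_cases Int_absorb1)
    then show ?thesis by (simp add: sum_subtractf algebra_simps)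
  qed
  also have "\<dots> = lam n q S * phi n q S y" by (simp add: lam_def N_def)
  finally show ?thesis .
qed

lemma sum_phi_all:
  assumes q: "q \<ge> 2" and x: "x \<in> hamming_space n q"
  shows "(\<Sum>S\<in>Pow {..<n}. phi n q S x) = (if x = replicate n 0 then 1 else 0)"
proof -
  have xl: "length x = n" using x by (simp add: hamming_space_def)
  define f1 where "f1 = (\<lambda>i::nat. 1 / real q)"
  define f2 where "f2 = (\<lambda>i. (if x!i = 0 then 1 else 0) - 1 / real q)"
  have "(\<Sum>S\<in>Pow {..<n}. phi n q S x) = (\<Sum>S\<in>Pow {..<n}. (\<Prod>i\<in>S. f1 i) * (\<Prod>i\<in>{..<n}-S. f2 i))"
  proof (rule sum.cong)
    fix S assume "S \<in> Pow {..<n}"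
    then have S: "S \<subseteq> {..<n}" by simp
    have "phi n q S x = (\<Prod>i\<in>{..<n}-S. gg q S i (x!i)) * (\<Prod>i\<in>S. gg q S i (x!i))"
      unfolding phi_def using prod.subset_diff[OF S] by simp
    also have "(\<Prod>i\<in>{..<n}-S. gg q S i (x!i)) = (\<Prod>i\<in>{..<n}-S. f2 i)"
      by (rule prod.cong) (auto simp: gg_def f2_def)
    also have "(\<Prod>i\<in>S. gg q S i (x!i)) = (\<Prod>i\<in>S. f1 i)"
      by (rule prod.cong) (auto simp: gg_def f1_def)
    finally show "phi n q S x = (\<Prod>i\<in>S. f1 i) * (\<Prod>i\<in>{..<n}-S. f2 i)" by simp
  qed simp
  also have "\<dots> = (\<Prod>i<n. f1 i + f2 i)" by (rule prod_add[symmetric]) simp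
  also have "\<dots> = (\<Prod>i<n. (if x!i = 0 then 1 else 0))" by (simp add: f1_def f2_def)
  also have "\<dots> = (if \<forall>i<n. x!i = 0 then 1 else 0)" by (rule prod_ind)
  also have "(\<forall>i<n. x!i = 0) \<longleftrightarrow> x = replicate n 0"
    using xl by (auto simp: list_eq_iff_nth_eq)
  finally show ?thesis .
qed

lemma nu_formula:
  assumes q: "q \<ge> 2" and n: "n \<ge> 1" and x: "x \<in> hamming_space n q"
  shows "nu_k n q k x = (\<Sum>S\<in>Pow {..<n}. lam n q S ^ k * phi n q S x)"
  using x
proof (induction k arbitrary: x)
  case 0
  then show ?case using sum_phi_all[OF q 0] by (simp add: nu_k_def eq_commute)
next
  case (Suc k)
  have "nu_k n q (Suc k) x = (\<Sum>z\<in>hamming_space n q. nu_k n q k z * trans_p n q z x)"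
    by (simp add: nu_k_def)
  also have "\<dots> = (\<Sum>z\<in>hamming_space n q. (\<Sum>S\<in>Pow {..<n}. lam n q S ^ k * phi n q S z) * trans_p n q z x)"
    by (rule sum.cong) (auto simp: Suc.IH)
  also have "\<dots> = (\<Sum>S\<in>Pow {..<n}. lam n q S ^ k * (\<Sum>z\<in>hamming_space n q. phi n q S z * trans_p n q z x))"
    by (simp add: sum_distrib_left sum_distrib_right sum.swap[of _ "Pow {..<n}"] mult_ac)
  also have "\<dots> = (\<Sum>S\<in>Pow {..<n}. lam n q S ^ Suc k * phi n q S x)"
    by (rule sum.cong) (auto simp: eigen[OF q n _ Suc.prems])
  finally show ?case .
qed

lemma sum_phi:
  assumes q: "q \<ge> 2" and S: "S \<subseteq> {..<n}" "S \<noteq> {..<n}"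
  shows "(\<Sum>x\<in>hamming_space n q. phi n q S x) = 0"
proof -
  obtain i where i: "i < n" "i \<notin> S" using S by auto
  have "(\<Sum>x\<in>hamming_space n q. phi n q S x) = (\<Prod>i<n. \<Sum>v<q. gg q S i v)"
    unfolding phi_def by (rule factor)
  also have "\<dots> = 0" using i q by (auto simp: sum_gg intro!: prod_zero)
  finally show ?thesis .
qed

lemma sum_gg2:
  assumes q: "q \<ge> 2"
  shows "(\<Sum>v<q. gg q S i v * gg q T i v) =
    (if i \<in> S \<and> i \<in> T then 1 / real q else if i \<notin> S \<and> i \<notin> T then (real q - 1) / real q else 0)"
proof -
  have q0: "real q > 0" using q by simp
  have e1: "(\<Sum>v<q. ((if v = 0 then 1 else 0) - 1 / real q) * ((if v = 0 then 1 else 0) - 1 / real q))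
      = (\<Sum>v<q. (if v = 0 then 1 - 2 / real q else 0) + 1 / real q ^ 2)"
    by (rule sum.cong) (auto simp: field_simps power2_eq_square)
  also have "\<dots> = (1 - 2 / real q) + real q * (1 / real q ^ 2)"
    using q by (simp add: sum.distrib)
  also have "\<dots> = (real q - 1) / real q"
    using q by (simp add: field_simps power2_eq_square)
  finally have e1: "(\<Sum>v<q. ((if v = 0 then 1 else 0) - 1 / real q) * ((if v = 0 then 1 else 0) - 1 / real q))
      = (real q - 1) / real q" .
  have z1: "(\<Sum>v<q. gg q S i v * gg q T i v) = 0" if "i \<in> S" "i \<notin> T"
  proof -
    have "(\<Sum>v<q. gg q S i v * gg q T i v) = (1 / real q) * (\<Sum>v<q. gg q T i v)"
      using that by (simp add: gg_def sum_distrib_left)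
    then show ?thesis using that q by (simp add: sum_gg)
  qed
  have z2: "(\<Sum>v<q. gg q S i v * gg q T i v) = 0" if "i \<notin> S" "i \<in> T"
  proof -
    have "(\<Sum>v<q. gg q S i v * gg q T i v) = (1 / real q) * (\<Sum>v<q. gg q S i v)"
      using that by (simp add: gg_def sum_distrib_left mult.commute)
    then show ?thesis using that q by (simp add: sum_gg)
  qed
  have z3: "(\<Sum>v<q. gg q S i v * gg q T i v) = 1 / real q" if "i \<in> S" "i \<in> T"
    using that q by (simp add: gg_def power2_eq_square)
  have z4: "(\<Sum>v<q. gg q S i v * gg q T i v) = (real q - 1) / real q" if "i \<notin> S" "i \<notin> T"
    using that e1 by (simp add: gg_def)
  show ?thesis using z1 z2 z3 z4 by auto
qed

lemma ortho:
  assumes q: "q \<ge> 2" and S: "S \<subseteq> {..<n}" and T: "T \<subseteq> {..<n}"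
  shows "(\<Sum>x\<in>hamming_space n q. phi n q S x * phi n q T x) =
    (if S = T then (1 / real q) ^ card S * ((real q - 1) / real q) ^ (n - card S) else 0)"
proof -
  have "(\<Sum>x\<in>hamming_space n q. phi n q S x * phi n q T x) = (\<Prod>i<n. \<Sum>v<q. gg q S i v * gg q T i v)"
    unfolding phi_def prod.distrib[symmetric] by (rule factor[where f="\<lambda>i v. gg q S i v * gg q T i v"])
  also have "\<dots> = (\<Prod>i<n. (if i \<in> S \<and> i \<in> T then 1 / real q else if i \<notin> S \<and> i \<notin> T then (real q - 1) / real q else 0))"
    using sum_gg2[OF q] by simp
  also have "\<dots> = (if S = T then (1 / real q) ^ card S * ((real q - 1) / real q) ^ (n - card S) else 0)"
  proof (cases "S = T")
    case True
    have "(\<Prod>i<n. (if i \<in> S \<and> i \<in> T then 1 / real q else if i \<notin> S \<and> i \<notin> T then (real q - 1) / real q else 0))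
        = (\<Prod>i<n. (if i \<in> S then 1 / real q else (real q - 1) / real q))"
      using True by (intro prod.cong) auto
    also have "\<dots> = (1 / real q) ^ card ({..<n} \<inter> S) * ((real q - 1) / real q) ^ card ({..<n} \<inter> - S)"
      by (simp add: prod.If_cases)
    also have "card ({..<n} \<inter> S) = card S" using S by (simp add: Int_absorb1)
    also have "card ({..<n} \<inter> - S) = n - card S" using S by (simp add: Diff_eq[symmetric] card_Diff_subset finite_subset)
    finally show ?thesis using True by simp
  next
    case False
    then obtain i where "i < n" "(i \<in> S) \<noteq> (i \<in> T)" using S T by blast
    then show ?thesis using False by (auto intro!: prod_zero)
  qed
  finally show ?thesis .
qed

lemma cardX: "card (hamming_space n q) = q ^ n"
proof -
  have "real (card (hamming_space n q)) = (\<Sum>x\<in>hamming_space n q. \<Prod>i<n. (\<lambda>i v. 1::real) i (x!i))"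
    by simp
  also have "\<dots> = real q ^ n" by (subst factor) simp
  finally show ?thesis by (metis of_nat_eq_of_nat_power_cancel_iff)
qed

lemma f_formula:
  assumes q: "q \<ge> 2" and n: "n \<ge> 1" and x: "x \<in> hamming_space n q"
  shows "nu_k n q k x - unif n q x = (\<Sum>S\<in>Pow {..<n} - {{..<n}}. lam n q S ^ k * phi n q S x)"
proof -
  have l: "lam n q {..<n} = 1" using q n by (simp add: lam_def field_simps)
  have p: "phi n q {..<n} x = 1 / real q ^ n" by (simp add: phi_def gg_def power_one_over)
  have "nu_k n q k x = lam n q {..<n} ^ k * phi n q {..<n} x + (\<Sum>S\<in>Pow {..<n} - {{..<n}}. lam n q S ^ k * phi n q S x)"
    using nu_formula[OF q n x] by (simp add: sum.remove[of "Pow {..<n}" "{..<n}"])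
  then show ?thesis using l p by (simp add: unif_def)
qed

lemma l2:
  assumes q: "q \<ge> 2" and P: "P \<subseteq> Pow {..<n}" "finite P"
  shows "(\<Sum>x\<in>hamming_space n q. (\<Sum>S\<in>P. c S * phi n q S x)\<^sup>2)
    = (\<Sum>S\<in>P. (c S)\<^sup>2 * ((1 / real q) ^ card S * ((real q - 1) / real q) ^ (n - card S)))"
proof -
  have "(\<Sum>x\<in>hamming_space n q. (\<Sum>S\<in>P. c S * phi n q S x)\<^sup>2)
      = (\<Sum>S\<in>P. \<Sum>T\<in>P. c S * c T * (\<Sum>x\<in>hamming_space n q. phi n q S x * phi n q T x))"
    by (simp add: power2_eq_square sum_product sum_distrib_left sum.swap[of _ "hamming_space n q"] mult_ac)
  also have "\<dots> = (\<Sum>S\<in>P. \<Sum>T\<in>P. c S * c T * (if S = T then (1 / real q) ^ card S * ((real q - 1) / real q) ^ (n - card S) else 0))"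
    using P by (intro sum.cong refl, subst ortho[OF q]) auto
  also have "\<dots> = (\<Sum>S\<in>P. (c S)\<^sup>2 * ((1 / real q) ^ card S * ((real q - 1) / real q) ^ (n - card S)))"
    using P by (simp add: if_distrib power2_eq_square sum.delta cong: if_cong)
  finally show ?thesis .
qed

lemma tv_half:
  fixes f :: "'a \<Rightarrow> real"
  assumes X: "finite X" and z: "sum f X = 0" and B: "B \<subseteq> X"
  shows "\<bar>sum f B\<bar> \<le> (\<Sum>x\<in>X. \<bar>f x\<bar>) / 2"
proof -
  have fB: "finite B" using X B finite_subset by blast
  have pm: "(\<Sum>x\<in>X. max (f x) 0) = (\<Sum>x\<in>X. max (- f x) 0)"
  proof -
    have "(\<Sum>x\<in>X. max (f x) 0) - (\<Sum>x\<in>X. max (- f x) 0) = sum f X"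
      by (simp add: sum_subtractf[symmetric]) (rule sum.cong, auto)
    then show ?thesis using z by simp
  qed
  have ab: "(\<Sum>x\<in>X. \<bar>f x\<bar>) = (\<Sum>x\<in>X. max (f x) 0) + (\<Sum>x\<in>X. max (- f x) 0)"
    by (simp add: sum.distrib[symmetric]) (rule sum.cong, auto)
  have u: "sum f B \<le> (\<Sum>x\<in>X. max (f x) 0)"
  proof -
    have "sum f B \<le> (\<Sum>x\<in>B. max (f x) 0)" by (rule sum_mono) simp
    also have "\<dots> \<le> (\<Sum>x\<in>X. max (f x) 0)" by (rule sum_mono2[OF X B]) simp
    finally show ?thesis .
  qed
  have l: "- sum f B \<le> (\<Sum>x\<in>X. max (- f x) 0)"
  proof -
    have "- sum f B \<le> (\<Sum>x\<in>B. max (- f x) 0)" by (simp add: sum_negf[symmetric]) (rule sum_mono, simp)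
    also have "\<dots> \<le> (\<Sum>x\<in>X. max (- f x) 0)" by (rule sum_mono2[OF X B]) simp
    finally show ?thesis .
  qed
  show ?thesis using u l pm ab by linarith
qed

lemma exp54: "exp (5/4::real) \<le> 4"
proof -
  have "1 + (-1/8) \<le> exp (-1/8::real)" by (rule exp_ge_add_one_self)
  then have "exp (1/8::real) \<le> 8/7"
    by (simp add: exp_minus field_simps)
  then have "exp (1/8::real) ^ 10 \<le> (8/7) ^ 10" by (rule power_mono) simp
  moreover have "exp (1/8::real) ^ 10 = exp (5/4)"
    using exp_of_nat_mult[of 10 "1/8::real"] by simp
  moreover have "(8/7::real) ^ 10 \<le> 4" by (simp add: power_divide)
  ultimately show ?thesis by simp
qed

lemma abs_lam:
  fixes x :: real
  assumes q: "q \<ge> 5" and x0: "0 \<le> x" and x1: "x \<le> real q / (real q - 1)"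
  shows "\<bar>1 - x\<bar> \<le> exp (- x)"
proof (cases "x \<le> 1")
  case True
  then show ?thesis using exp_ge_add_one_self[of "-x"] by simp
next
  case False
  have q1: "real q - 1 \<ge> 4" using q by simp
  have a: "x - 1 \<le> 1 / (real q - 1)" using x1 q1 by (simp add: field_simps)
  have b: "real q / (real q - 1) \<le> 5/4" using q1 by (simp add: field_simps)
  have "exp (real q / (real q - 1)) \<le> real q - 1"
    using exp54 exp_le_cancel_iff[of "real q / (real q - 1)" "5/4"] b q1 by linarith
  then have c: "1 / (real q - 1) \<le> exp (- (real q / (real q - 1)))"
    using q1 by (simp add: exp_minus field_simps)
  have d: "exp (- (real q / (real q - 1))) \<le> exp (-x)" using x1 by simp
  have e: "\<bar>1 - x\<bar> = x - 1" using False by simp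
  show ?thesis unfolding e using a c d by linarith
qed

lemma term_bound:
  fixes q n k :: nat and c :: real
  assumes q: "q \<ge> 5" and n: "n \<ge> 1"
    and kdef: "real k = real n * (real q - 1) / (2 * real q) * (ln (real n * (real q - 1)) + c)"
    and S: "S \<subseteq> {..<n}" "S \<noteq> {..<n}"
  shows "real q ^ n * ((lam n q S ^ k)\<^sup>2 * ((1 / real q) ^ card S * ((real q - 1) / real q) ^ (n - card S)))
     \<le> (exp (- c) / real n) ^ (n - card S)"
proof -
  define s where "s = card S"
  define t where "t = n - s"
  define L where "L = ln (real n * (real q - 1))"
  have sn: "s \<le> n" using S card_mono[of "{..<n}" S] by (simp add: s_def)
  have nst: "n = s + t" using sn by (simp add: t_def)
  have q1: "real q - 1 \<ge> 4" using q by simp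
  have qpos: "real q > 0" using q by simp
  have npos: "real n > 0" using n by simp
  define xx where "xx = real q * real t / (real n * (real q - 1))"
  have num: "real q * real s - real n = real n * (real q - 1) - real q * real t"
    using nst by (simp add: algebra_simps)
  have D: "real n * (real q - 1) \<noteq> 0" using npos q1 by simp
  have hl: "lam n q S = 1 - xx"
    unfolding lam_def xx_def s_def[symmetric] num using D
    by (simp add: diff_divide_distrib)
  have xx0: "0 \<le> xx" using q1 npos by (simp add: xx_def)
  have xx1: "xx \<le> real q / (real q - 1)"
  proof -
    have "real t \<le> real n" using nst by simp
    then have "real q * real t \<le> real q * real n" using qpos by simp
    then have "real q * real t / (real n * (real q - 1)) \<le> real q * real n / (real n * (real q - 1))"
      by (rule divide_right_mono) (use npos q1 in simp)
    also have "\<dots> = real q / (real q - 1)" using npos by simp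
    finally show ?thesis by (simp add: xx_def)
  qed
  have ha: "\<bar>lam n q S\<bar> \<le> exp (- xx)" unfolding hl by (rule abs_lam[OF q xx0 xx1])
  have "(lam n q S ^ k)\<^sup>2 = (\<bar>lam n q S\<bar> ^ k)\<^sup>2" by (simp add: power_abs[symmetric])
  also have "\<dots> \<le> (exp (- xx) ^ k)\<^sup>2"
    by (intro power_mono ha) simp_all
  also have "exp (- xx) ^ k = exp (real k * (- xx))" by (rule exp_of_nat_mult[symmetric])
  also have "(exp (real k * (- xx)))\<^sup>2 = exp (- (real t * (L + c)))"
  proof -
    have "2 * (real k * xx) = real t * (L + c)"
      unfolding kdef xx_def L_def using npos q1 qpos by (simp add: field_simps)
    then have "real k * (- xx) + real k * (- xx) = - (real t * (L + c))" by (simp add: mult_ac)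
    then show ?thesis by (simp add: power2_eq_square exp_add[symmetric])
  qed
  also have "\<dots> = exp (- (L + c)) ^ t"
    using exp_of_nat_mult[of t "- (L + c)"] by (simp add: algebra_simps)
  also have "exp (- (L + c)) = exp (- c) / (real n * (real q - 1))"
  proof -
    have eL: "exp L = real n * (real q - 1)" unfolding L_def using npos q1 by simp
    have "exp (- (L + c)) = exp (- c - L)" by (simp add: algebra_simps)
    also have "\<dots> = exp (- c) / exp L" by (rule exp_diff)
    finally show ?thesis using eL by simp
  qed
  finally have hL: "(lam n q S ^ k)\<^sup>2 \<le> (exp (- c) / (real n * (real q - 1))) ^ t" .
  have hW: "real q ^ n * ((1 / real q) ^ s * ((real q - 1) / real q) ^ t) = (real q - 1) ^ t"
    unfolding nst power_add using qpos by (simp add: power_divide field_simps)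
  have "real q ^ n * ((lam n q S ^ k)\<^sup>2 * ((1 / real q) ^ s * ((real q - 1) / real q) ^ t))
      = (lam n q S ^ k)\<^sup>2 * (real q - 1) ^ t"
    using hW by (simp add: mult_ac)
  also have "\<dots> \<le> (exp (- c) / (real n * (real q - 1))) ^ t * (real q - 1) ^ t"
    by (rule mult_right_mono[OF hL]) (use q1 in simp)
  also have "\<dots> = (exp (- c) / real n) ^ t"
  proof -
    have "exp (- c) / (real n * (real q - 1)) * (real q - 1) = exp (- c) / real n" using q1 by simp
    then show ?thesis by (metis power_mult_distrib)
  qed
  finally show ?thesis by (simp add: s_def t_def)
qed

lemma pow_sum:
  fixes a :: real
  shows "(\<Sum>S\<in>Pow {..<n} - {{..<n}}. a ^ (n - card S)) = (1 + a) ^ n - 1"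
proof -
  have "(1 + a) ^ n = (\<Prod>i<n. 1 + a)" by simp
  also have "\<dots> = (\<Sum>X\<in>Pow {..<n}. (\<Prod>i\<in>X. 1) * (\<Prod>i\<in>{..<n}-X. a))"
    by (rule prod_add) simp
  also have "\<dots> = (\<Sum>X\<in>Pow {..<n}. a ^ (n - card X))"
    by (intro sum.cong refl) (auto simp: card_Diff_subset finite_subset)
  also have "\<dots> = a ^ (n - card {..<n}) + (\<Sum>X\<in>Pow {..<n} - {{..<n}}. a ^ (n - card X))"
    by (simp add: sum.remove[of "Pow {..<n}" "{..<n}"])
  finally show ?thesis by simp
qed

theorem theorem1p1:
  fixes q n k :: nat and c :: real
  assumes "q \<ge> 5" and "n \<ge> 1" and "c > 0"
    and "real k = real n * (real q - 1) / (2 * real q) * (ln (real n * (real q - 1)) + c)"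
  shows "(tv_dist n q (nu_k n q k) (unif n q))\<^sup>2 \<le> 1/4 * (exp (exp (- c)) - 1)"
proof -
  note q = assms(1) and n = assms(2) and kdef = assms(4)
  have q2: "q \<ge> 2" using q by simp
  define X where "X = hamming_space n q"
  define F where "F x = nu_k n q k x - unif n q x" for x
  define P where "P = Pow {..<n} - {{..<n}}"
  have fX: "finite X" by (simp add: X_def hs_finite)
  have fP: "finite P" and PP: "P \<subseteq> Pow {..<n}" by (auto simp: P_def)
  have hF: "F x = (\<Sum>S\<in>P. lam n q S ^ k * phi n q S x)" if "x \<in> X" for x
    using f_formula[OF q2 n, of x k] that by (simp add: F_def X_def P_def)
  have sumF: "sum F X = 0"
  proof -
    have "sum F X = (\<Sum>x\<in>X. \<Sum>S\<in>P. lam n q S ^ k * phi n q S x)" by (rule sum.cong) (simp_all add: hF)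
    also have "\<dots> = (\<Sum>S\<in>P. lam n q S ^ k * (\<Sum>x\<in>X. phi n q S x))"
      by (simp add: sum.swap[of _ X] sum_distrib_left)
    also have "\<dots> = 0" by (rule sum.neutral) (auto simp: P_def X_def sum_phi[OF q2])
    finally show ?thesis .
  qed
  have sq: "(\<Sum>x\<in>X. (F x)\<^sup>2) = (\<Sum>S\<in>P. (lam n q S ^ k)\<^sup>2 * ((1 / real q) ^ card S * ((real q - 1) / real q) ^ (n - card S)))"
  proof -
    have "(\<Sum>x\<in>X. (F x)\<^sup>2) = (\<Sum>x\<in>X. (\<Sum>S\<in>P. lam n q S ^ k * phi n q S x)\<^sup>2)"
      by (rule sum.cong) (simp_all add: hF)
    also have "\<dots> = (\<Sum>S\<in>P. (lam n q S ^ k)\<^sup>2 * ((1 / real q) ^ card S * ((real q - 1) / real q) ^ (n - card S)))"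
      unfolding X_def by (rule l2[OF q2 PP fP])
    finally show ?thesis .
  qed
  define e where "e = exp (- c)"
  have bnd: "real q ^ n * (\<Sum>x\<in>X. (F x)\<^sup>2) \<le> exp e - 1"
  proof -
    have "real q ^ n * (\<Sum>x\<in>X. (F x)\<^sup>2) = (\<Sum>S\<in>P. real q ^ n * ((lam n q S ^ k)\<^sup>2 * ((1 / real q) ^ card S * ((real q - 1) / real q) ^ (n - card S))))"
      by (simp add: sq sum_distrib_left)
    also have "\<dots> \<le> (\<Sum>S\<in>P. (e / real n) ^ (n - card S))"
      by (rule sum_mono) (use term_bound[OF q n kdef] in \<open>auto simp: P_def e_def\<close>)
    also have "\<dots> = (1 + e / real n) ^ n - 1" unfolding P_def by (rule pow_sum)
    also have "(1 + e / real n) ^ n \<le> exp (e / real n) ^ n"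
      by (rule power_mono) (use exp_ge_add_one_self[of "e / real n"] in \<open>simp_all add: e_def\<close>)
    also have "exp (e / real n) ^ n = exp e"
      using exp_of_nat_mult[of n "e / real n"] n by simp
    finally show ?thesis by simp
  qed
  have cs: "(\<Sum>x\<in>X. \<bar>F x\<bar>)\<^sup>2 \<le> real q ^ n * (\<Sum>x\<in>X. (F x)\<^sup>2)"
  proof -
    have "(\<Sum>x\<in>X. \<bar>F x\<bar> * 1)\<^sup>2 \<le> (\<Sum>x\<in>X. (\<bar>F x\<bar>)\<^sup>2) * (\<Sum>x\<in>X. 1\<^sup>2)"
      by (rule Cauchy_Schwarz_ineq_sum)
    moreover have "(\<Sum>x\<in>X. (1::real)\<^sup>2) = real q ^ n" using cardX[of n q] by (simp add: X_def)
    ultimately show ?thesis by (simp add: mult.commute)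
  qed
  define M where "M = (\<Sum>x\<in>X. \<bar>F x\<bar>) / 2"
  define T where "T = {\<bar>sum (nu_k n q k) S - sum (unif n q) S\<bar> | S. S \<subseteq> hamming_space n q}"
  have Teq: "T = (\<lambda>S. \<bar>sum (nu_k n q k) S - sum (unif n q) S\<bar>) ` Pow X" by (auto simp: T_def X_def)
  have fT: "finite T" using fX by (simp add: Teq)
  have neT: "0 \<in> T" unfolding Teq by (rule image_eqI[of _ _ "{}"]) auto
  have le: "t \<le> M" if "t \<in> T" for t
  proof -
    from that obtain B where B: "B \<subseteq> X" and t: "t = \<bar>sum (nu_k n q k) B - sum (unif n q) B\<bar>"
      unfolding Teq by auto
    have "t = \<bar>sum F B\<bar>" by (simp add: t F_def sum_subtractf)
    also have "\<dots> \<le> M" unfolding M_def by (rule tv_half[OF fX sumF B])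
    finally show ?thesis .
  qed
  have tv: "tv_dist n q (nu_k n q k) (unif n q) = Max T" by (simp add: tv_dist_def T_def)
  have tv0: "0 \<le> Max T" using Max_ge[OF fT neT] .
  have tvM: "Max T \<le> M" using fT neT le by (subst Max_le_iff) auto
  have "(Max T)\<^sup>2 \<le> M\<^sup>2" by (rule power_mono[OF tvM tv0])
  also have "M\<^sup>2 = (\<Sum>x\<in>X. \<bar>F x\<bar>)\<^sup>2 / 4" by (simp add: M_def power_divide)
  also have "\<dots> \<le> (exp e - 1) / 4" using cs bnd by simp
  finally show ?thesis by (simp add: tv e_def)
qed

end
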